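(* Every simple $\mathcal K_{m,n}$-module is strictly simple, i.e. it has no $\mathcal K_{m,n}$-invariant subspaces (graded or not) other than $0$ and itself.
   Context: Fix $(m,n)\in\mathbb Z_+^2\setminus\{(0,0)\}$. $\mathcal K_{m,n}$ is the Weyl superalgebra: the associative superalgebra generated by even elements $t_1,\dots,t_m,\partial_{t_1},\dots,\partial_{t_m}$ and odd elements $\xi_1,\dots,\xi_n,\partial_{\xi_1},\dots,\partial_{\xi_n}$, acting as multiplication and (super)derivation operators on $\mathbb C[t_1,\dots,t_m]\otimes\Lambda(\xi_1,\dots,\xi_n)$ (equivalently, the subalgebra of $\bar U$ generated by $A$ and $\Delta$). Modules are $\mathbb Z_2$-graded, and "simple" means having no nontrivial $\mathbb Z_2$-graded submodules. *)

theory Defs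
  imports Main Complex_Main
begin

text \<open>T i, Dt i (i < m) are the actions of the even generators t_i, d/dt_i;
  X i, Dx i (i < n) are the actions of the odd generators xi_i, d/dxi_i.\<close>

definition weyl_super_module ::
  "nat \<Rightarrow> nat \<Rightarrow> (complex \<Rightarrow> 'v::ab_group_add \<Rightarrow> 'v)
   \<Rightarrow> (nat \<Rightarrow> 'v \<Rightarrow> 'v) \<Rightarrow> (nat \<Rightarrow> 'v \<Rightarrow> 'v) \<Rightarrow> (nat \<Rightarrow> 'v \<Rightarrow> 'v) \<Rightarrow> (nat \<Rightarrow> 'v \<Rightarrow> 'v)
   \<Rightarrow> 'v set \<Rightarrow> 'v set \<Rightarrow> bool" where
  "weyl_super_module m n sc T Dt X Dx V0 V1 \<longleftrightarrow>
     vector_space sc \<and>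
     \<comment> \<open>grading: V = V0 \<oplus> V1\<close>
     module.subspace sc V0 \<and> module.subspace sc V1 \<and> V0 \<inter> V1 = {0} \<and>
     (\<forall>v. \<exists>a\<in>V0. \<exists>b\<in>V1. v = a + b) \<and>
     \<comment> \<open>generators act linearly\<close>
     (\<forall>i<m. Vector_Spaces.linear sc sc (T i) \<and> Vector_Spaces.linear sc sc (Dt i)) \<and>
     (\<forall>i<n. Vector_Spaces.linear sc sc (X i) \<and> Vector_Spaces.linear sc sc (Dx i)) \<and>
     \<comment> \<open>parity of the generators\<close>
     (\<forall>i<m. T i ` V0 \<subseteq> V0 \<and> T i ` V1 \<subseteq> V1 \<and> Dt i ` V0 \<subseteq> V0 \<and> Dt i ` V1 \<subseteq> V1) \<and>
     (\<forall>i<n. X i ` V0 \<subseteq> V1 \<and> X i ` V1 \<subseteq> V0 \<and> Dx i ` V0 \<subseteq> V1 \<and> Dx i ` V1 \<subseteq> V0) \<and>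
     \<comment> \<open>even-even relations\<close>
     (\<forall>i<m. \<forall>j<m. \<forall>v.
        T i (T j v) = T j (T i v) \<and> Dt i (Dt j v) = Dt j (Dt i v) \<and>
        Dt i (T j v) - T j (Dt i v) = (if i = j then v else 0)) \<and>
     \<comment> \<open>odd-odd relations (anticommutators)\<close>
     (\<forall>i<n. \<forall>j<n. \<forall>v.
        X i (X j v) + X j (X i v) = 0 \<and> Dx i (Dx j v) + Dx j (Dx i v) = 0 \<and>
        Dx i (X j v) + X j (Dx i v) = (if i = j then v else 0)) \<and>
     \<comment> \<open>even-odd relations (commutators)\<close>
     (\<forall>i<m. \<forall>j<n. \<forall>v.
        T i (X j v) = X j (T i v) \<and> T i (Dx j v) = Dx j (T i v) \<and>
        Dt i (X j v) = X j (Dt i v) \<and> Dt i (Dx j v) = Dx j (Dt i v))"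

definition weyl_invariant_subspace ::
  "nat \<Rightarrow> nat \<Rightarrow> (complex \<Rightarrow> 'v::ab_group_add \<Rightarrow> 'v)
   \<Rightarrow> (nat \<Rightarrow> 'v \<Rightarrow> 'v) \<Rightarrow> (nat \<Rightarrow> 'v \<Rightarrow> 'v) \<Rightarrow> (nat \<Rightarrow> 'v \<Rightarrow> 'v) \<Rightarrow> (nat \<Rightarrow> 'v \<Rightarrow> 'v)
   \<Rightarrow> 'v set \<Rightarrow> bool" where
  "weyl_invariant_subspace m n sc T Dt X Dx W \<longleftrightarrow>
     module.subspace sc W \<and>
     (\<forall>i<m. T i ` W \<subseteq> W \<and> Dt i ` W \<subseteq> W) \<and>
     (\<forall>i<n. X i ` W \<subseteq> W \<and> Dx i ` W \<subseteq> W)"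

definition weyl_graded_submodule ::
  "nat \<Rightarrow> nat \<Rightarrow> (complex \<Rightarrow> 'v::ab_group_add \<Rightarrow> 'v)
   \<Rightarrow> (nat \<Rightarrow> 'v \<Rightarrow> 'v) \<Rightarrow> (nat \<Rightarrow> 'v \<Rightarrow> 'v) \<Rightarrow> (nat \<Rightarrow> 'v \<Rightarrow> 'v) \<Rightarrow> (nat \<Rightarrow> 'v \<Rightarrow> 'v)
   \<Rightarrow> 'v set \<Rightarrow> 'v set \<Rightarrow> 'v set \<Rightarrow> bool" where
  "weyl_graded_submodule m n sc T Dt X Dx V0 V1 W \<longleftrightarrow>
     weyl_invariant_subspace m n sc T Dt X Dx W \<and>
     (\<forall>w\<in>W. \<exists>a\<in>W \<inter> V0. \<exists>b\<in>W \<inter> V1. w = a + b)"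

definition weyl_simple ::
  "nat \<Rightarrow> nat \<Rightarrow> (complex \<Rightarrow> 'v::ab_group_add \<Rightarrow> 'v)
   \<Rightarrow> (nat \<Rightarrow> 'v \<Rightarrow> 'v) \<Rightarrow> (nat \<Rightarrow> 'v \<Rightarrow> 'v) \<Rightarrow> (nat \<Rightarrow> 'v \<Rightarrow> 'v) \<Rightarrow> (nat \<Rightarrow> 'v \<Rightarrow> 'v)
   \<Rightarrow> 'v set \<Rightarrow> 'v set \<Rightarrow> bool" where
  "weyl_simple m n sc T Dt X Dx V0 V1 \<longleftrightarrow>
     weyl_super_module m n sc T Dt X Dx V0 V1 \<and>
     (UNIV :: 'v set) \<noteq> {0} \<and>
     (\<forall>W. weyl_graded_submodule m n sc T Dt X Dx V0 V1 W \<longrightarrow> W = {0} \<or> W = UNIV)"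

end

theory Submission
  imports Defs
begin

lemma lin_facts:
  assumes "Vector_Spaces.linear s s f"
  shows "f (x + y) = f x + f y" "f (x - y) = f x - f y" "f 0 = 0" "f (- x) = - f x"
    "f (s r x) = s r (f x)"
proof -
  have h: "module_hom s s f" using assms by (simp add: module_hom_iff_linear)
  show "f (x + y) = f x + f y" by (rule module_hom.add[OF h])
  show "f (x - y) = f x - f y" by (rule module_hom.diff[OF h])
  show "f 0 = 0" by (rule module_hom.zero[OF h])
  show "f (- x) = - f x" by (rule module_hom.neg[OF h])
  show "f (s r x) = s r (f x)" by (rule module_hom.scale[OF h])
qed

locale WSM =
  fixes m n :: nat
    and sc :: "complex \<Rightarrow> 'v::ab_group_add \<Rightarrow> 'v"
    and T Dt X Dx :: "nat \<Rightarrow> 'v \<Rightarrow> 'v"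
    and V0 V1 :: "'v set"
  assumes wsm: "weyl_super_module m n sc T Dt X Dx V0 V1"
begin

lemmas WW = wsm[unfolded weyl_super_module_def]
lemmas c1 = WW[THEN conjunct1]
lemmas c2 = WW[THEN conjunct2, THEN conjunct1]
lemmas c3 = WW[THEN conjunct2, THEN conjunct2, THEN conjunct1]
lemmas c4 = WW[THEN conjunct2, THEN conjunct2, THEN conjunct2, THEN conjunct1]
lemmas c5 = WW[THEN conjunct2, THEN conjunct2, THEN conjunct2, THEN conjunct2, THEN conjunct1]
lemmas c6 = WW[THEN conjunct2, THEN conjunct2, THEN conjunct2, THEN conjunct2, THEN conjunct2, THEN conjunct1]
lemmas c7 = WW[THEN conjunct2, THEN conjunct2, THEN conjunct2, THEN conjunct2, THEN conjunct2, THEN conjunct2, THEN conjunct1]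
lemmas c8 = WW[THEN conjunct2, THEN conjunct2, THEN conjunct2, THEN conjunct2, THEN conjunct2, THEN conjunct2, THEN conjunct2, THEN conjunct1]
lemmas c9 = WW[THEN conjunct2, THEN conjunct2, THEN conjunct2, THEN conjunct2, THEN conjunct2, THEN conjunct2, THEN conjunct2, THEN conjunct2, THEN conjunct1]
lemmas c11 = WW[THEN conjunct2, THEN conjunct2, THEN conjunct2, THEN conjunct2, THEN conjunct2, THEN conjunct2, THEN conjunct2, THEN conjunct2, THEN conjunct2, THEN conjunct2, THEN conjunct1]
lemmas c12 = WW[THEN conjunct2, THEN conjunct2, THEN conjunct2, THEN conjunct2, THEN conjunct2, THEN conjunct2, THEN conjunct2, THEN conjunct2, THEN conjunct2, THEN conjunct2, THEN conjunct2]

sublocale vs: vector_space sc by (rule c1)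

lemma sub0: "vs.subspace V0" by (rule c2)
lemma sub1: "vs.subspace V1" by (rule c3)
lemma int01: "V0 \<inter> V1 = {0}" by (rule c4)
lemma decomp: "\<exists>a\<in>V0. \<exists>b\<in>V1. v = a + b" using c5 by blast

lemma linT: "i < m \<Longrightarrow> Vector_Spaces.linear sc sc (T i)"
  and linDt: "i < m \<Longrightarrow> Vector_Spaces.linear sc sc (Dt i)"
  using c6 by blast+
lemma linX: "j < n \<Longrightarrow> Vector_Spaces.linear sc sc (X j)"
  and linDx: "j < n \<Longrightarrow> Vector_Spaces.linear sc sc (Dx j)"
  using c7 by blast+

lemma parT: "i < m \<Longrightarrow> a \<in> V0 \<Longrightarrow> T i a \<in> V0" "i < m \<Longrightarrow> b \<in> V1 \<Longrightarrow> T i b \<in> V1"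
  "i < m \<Longrightarrow> a \<in> V0 \<Longrightarrow> Dt i a \<in> V0" "i < m \<Longrightarrow> b \<in> V1 \<Longrightarrow> Dt i b \<in> V1"
  using c8 by blast+

lemma parX: "j < n \<Longrightarrow> a \<in> V0 \<Longrightarrow> X j a \<in> V1" "j < n \<Longrightarrow> b \<in> V1 \<Longrightarrow> X j b \<in> V0"
  "j < n \<Longrightarrow> a \<in> V0 \<Longrightarrow> Dx j a \<in> V1" "j < n \<Longrightarrow> b \<in> V1 \<Longrightarrow> Dx j b \<in> V0"
  using c9 by blast+

lemma oo: "i < n \<Longrightarrow> j < n \<Longrightarrow> X i (X j v) + X j (X i v) = 0"
   "i < n \<Longrightarrow> j < n \<Longrightarrow> Dx i (Dx j v) + Dx j (Dx i v) = 0"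
   "i < n \<Longrightarrow> j < n \<Longrightarrow> Dx i (X j v) + X j (Dx i v) = (if i = j then v else 0)"
  using c11 by blast+

lemma eo: "i < m \<Longrightarrow> j < n \<Longrightarrow> T i (X j v) = X j (T i v)"
  "i < m \<Longrightarrow> j < n \<Longrightarrow> T i (Dx j v) = Dx j (T i v)"
  "i < m \<Longrightarrow> j < n \<Longrightarrow> Dt i (X j v) = X j (Dt i v)"
  "i < m \<Longrightarrow> j < n \<Longrightarrow> Dt i (Dx j v) = Dx j (Dt i v)"
  using c12 by blast+

lemma half: "v = sc (1/2) (v + u) + sc (1/2) (v - u)"
proof -
  have "sc (1/2) (v + u) + sc (1/2) (v - u) = sc (1/2) v + sc (1/2) v"
    by (simp add: vs.scale_right_distrib vs.scale_right_diff_distrib)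
  also have "\<dots> = sc (1/2 + 1/2) v" by (simp only: vs.scale_left_distrib)
  finally show ?thesis by simp
qed

lemma dbl0: "x + x = (0::'v) \<Longrightarrow> x = 0"
  using half[of x x] by simp

lemma XX: "i < n \<Longrightarrow> X i (X i v) = 0" using oo(1)[of i i v] dbl0 by blast
lemma DD: "i < n \<Longrightarrow> Dx i (Dx i v) = 0" using oo(2)[of i i v] dbl0 by blast
lemma XXa: "i < n \<Longrightarrow> j < n \<Longrightarrow> X i (X j v) = - X j (X i v)"
  using oo(1)[of i j v] by (simp add: eq_neg_iff_add_eq_0)
lemma DDa: "i < n \<Longrightarrow> j < n \<Longrightarrow> Dx i (Dx j v) = - Dx j (Dx i v)"
  using oo(2)[of i j v] by (simp add: eq_neg_iff_add_eq_0)
lemma DXs: "i < n \<Longrightarrow> Dx i (X i v) = v - X i (Dx i v)"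
  using oo(3)[of i i v] by (simp add: eq_diff_eq)
lemma DXa: "i < n \<Longrightarrow> j < n \<Longrightarrow> i \<noteq> j \<Longrightarrow> Dx i (X j v) = - X j (Dx i v)"
  using oo(3)[of i j v] by (simp add: eq_neg_iff_add_eq_0)

definition f :: "nat \<Rightarrow> 'v \<Rightarrow> 'v" where
  "f k u = Dx k (X k u) - X k (Dx k u)"

lemma f_add: "k < n \<Longrightarrow> f k (u + v) = f k u + f k v"
  using lin_facts[OF linX[of k]] lin_facts[OF linDx[of k]] by (simp add: f_def)
lemma f_scale: "k < n \<Longrightarrow> f k (sc r u) = sc r (f k u)"
  using lin_facts[OF linX[of k]] lin_facts[OF linDx[of k]]
  by (simp add: f_def vs.scale_right_diff_distrib)
lemma f_diff: "k < n \<Longrightarrow> f k (u - v) = f k u - f k v"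
  using lin_facts[OF linX[of k]] lin_facts[OF linDx[of k]] by (simp add: f_def)
lemma f_neg: "k < n \<Longrightarrow> f k (- u) = - f k u"
  using lin_facts[OF linX[of k]] lin_facts[OF linDx[of k]] by (simp add: f_def)

lemma f_inv: "k < n \<Longrightarrow> f k (f k u) = u"
proof -
  assume k: "k < n"
  note lx = lin_facts[OF linX[OF k]] and ld = lin_facts[OF linDx[OF k]]
  have "f k (f k u) = Dx k (X k (Dx k (X k u))) + X k (Dx k (X k (Dx k u)))"
    using k by (simp add: f_def lx ld XX DD)
  also have "Dx k (X k (Dx k (X k u))) = Dx k (X k u)"
    using k by (simp add: DXs[OF k, of "Dx k (X k u)"] DD lx ld)
  also have "X k (Dx k (X k (Dx k u))) = X k (Dx k u)"
    using k by (simp add: DXs[OF k, of "Dx k u"] lx XX)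
  also have "Dx k (X k u) + X k (Dx k u) = u" using DXs[OF k, of u] by simp
  finally show ?thesis .
qed

lemma f_T: "k < n \<Longrightarrow> i < m \<Longrightarrow> f k (T i u) = T i (f k u)"
  using lin_facts[OF linT[of i]] by (simp add: f_def eo)
lemma f_Dt: "k < n \<Longrightarrow> i < m \<Longrightarrow> f k (Dt i u) = Dt i (f k u)"
  using lin_facts[OF linDt[of i]] by (simp add: f_def eo)

lemma f_X: "k < n \<Longrightarrow> j < n \<Longrightarrow> f k (X j u) = (if j = k then - X j (f k u) else X j (f k u))"
proof -
  assume k: "k < n" and j: "j < n"
  note lx = lin_facts[OF linX[OF k]] and ld = lin_facts[OF linDx[OF k]]
  note ljx = lin_facts[OF linX[OF j]]
  show ?thesis
  proof (cases "j = k")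
    case True
    then show ?thesis using k by (simp add: f_def lx ld XX)
  next
    case False
    have "f k (X j u) = Dx k (- X j (X k u)) - X k (- X j (Dx k u))"
      unfolding f_def using XXa[OF k j] DXa[OF k j] False by simp
    also have "\<dots> = X j (Dx k (X k u)) - X j (X k (Dx k u))"
      using DXa[OF k j] False XXa[OF k j] by (simp add: ld lx)
    also have "\<dots> = X j (f k u)" by (simp add: f_def ljx)
    finally show ?thesis using False by simp
  qed
qed

lemma f_Dx: "k < n \<Longrightarrow> j < n \<Longrightarrow> f k (Dx j u) = (if j = k then - Dx j (f k u) else Dx j (f k u))"
proof -
  assume k: "k < n" and j: "j < n"
  note lx = lin_facts[OF linX[OF k]] and ld = lin_facts[OF linDx[OF k]]
  note ljd = lin_facts[OF linDx[OF j]]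
  show ?thesis
  proof (cases "j = k")
    case True
    then show ?thesis using k by (simp add: f_def ld lx DD)
  next
    case False
    have e1g: "\<And>v. X k (Dx j v) = - Dx j (X k v)" using DXa[OF j k False] by (simp add: eq_neg_iff_add_eq_0 add.commute)
    have "f k (Dx j u) = Dx k (- Dx j (X k u)) - X k (- Dx j (Dx k u))"
      unfolding f_def e1g DDa[OF k j] ..
    also have "\<dots> = Dx j (Dx k (X k u)) - Dx j (X k (Dx k u))"
      by (simp add: ld lx DDa[OF k j] e1g)
    also have "\<dots> = Dx j (f k u)" by (simp add: f_def ljd)
    finally show ?thesis using False by simp
  qed
qed

lemma f_V0: "k < n \<Longrightarrow> a \<in> V0 \<Longrightarrow> f k a \<in> V0"
  unfolding f_def by (intro vs.subspace_diff[OF sub0] parX) auto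
lemma f_V1: "k < n \<Longrightarrow> a \<in> V1 \<Longrightarrow> f k a \<in> V1"
  unfolding f_def by (intro vs.subspace_diff[OF sub1] parX) auto

fun cop :: "nat \<Rightarrow> 'v \<Rightarrow> 'v" where
  "cop 0 v = v"
| "cop (Suc k) v = f k (cop k v)"

lemma cop_add: "k \<le> n \<Longrightarrow> cop k (u + v) = cop k u + cop k v"
  by (induction k) (auto simp: f_add)
lemma cop_scale: "k \<le> n \<Longrightarrow> cop k (sc r u) = sc r (cop k u)"
  by (induction k) (auto simp: f_scale)
lemma cop_diff: "k \<le> n \<Longrightarrow> cop k (u - v) = cop k u - cop k v"
  by (induction k) (auto simp: f_diff)
lemma cop_neg: "k \<le> n \<Longrightarrow> cop k (- u) = - cop k u"
  by (induction k) (auto simp: f_neg)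
lemma cop_T: "k \<le> n \<Longrightarrow> i < m \<Longrightarrow> cop k (T i u) = T i (cop k u)"
  by (induction k) (auto simp: f_T)
lemma cop_Dt: "k \<le> n \<Longrightarrow> i < m \<Longrightarrow> cop k (Dt i u) = Dt i (cop k u)"
  by (induction k) (auto simp: f_Dt)
lemma cop_X: "k \<le> n \<Longrightarrow> j < n \<Longrightarrow> cop k (X j u) = (if j < k then - X j (cop k u) else X j (cop k u))"
  by (induction k) (auto simp: f_X f_neg)
lemma cop_Dx: "k \<le> n \<Longrightarrow> j < n \<Longrightarrow> cop k (Dx j u) = (if j < k then - Dx j (cop k u) else Dx j (cop k u))"
  by (induction k) (auto simp: f_Dx f_neg)
lemma cop_f: "k < n \<Longrightarrow> cop k (f k u) = f k (cop k u)"
  unfolding f_def by (simp add: cop_diff cop_X cop_Dx)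
lemma cop_inv: "k \<le> n \<Longrightarrow> cop k (cop k u) = u"
proof (induction k)
  case (Suc k)
  then have k: "k < n" by simp
  have "cop (Suc k) (cop (Suc k) u) = f k (cop k (f k (cop k u)))" by simp
  also have "\<dots> = f k (f k (cop k (cop k u)))" using k by (simp add: cop_f)
  also have "\<dots> = u" using Suc k by (simp add: f_inv)
  finally show ?case .
qed simp
lemma cop_V0: "k \<le> n \<Longrightarrow> a \<in> V0 \<Longrightarrow> cop k a \<in> V0"
  by (induction k) (auto simp: f_V0)
lemma cop_V1: "k \<le> n \<Longrightarrow> a \<in> V1 \<Longrightarrow> cop k a \<in> V1"
  by (induction k) (auto simp: f_V1)

lemma cop_W: assumes W: "weyl_invariant_subspace m n sc T Dt X Dx W"
  shows "k \<le> n \<Longrightarrow> w \<in> W \<Longrightarrow> cop k w \<in> W"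
proof (induction k)
  case (Suc k)
  have sW: "vs.subspace W" and iW: "\<forall>i<n. X i ` W \<subseteq> W \<and> Dx i ` W \<subseteq> W"
    using W unfolding weyl_invariant_subspace_def by auto
  from Suc have k: "k < n" and c: "cop k w \<in> W" by auto
  show ?case using iW k c
    by (simp add: f_def vs.subspace_diff[OF sW] image_subset_iff)
qed simp

abbreviation "c \<equiv> cop n"

lemma uniq: "a \<in> V0 \<Longrightarrow> b \<in> V1 \<Longrightarrow> a' \<in> V0 \<Longrightarrow> b' \<in> V1 \<Longrightarrow> a + b = a' + b' \<Longrightarrow> a = a' \<and> b = b'"
proof -
  assume h: "a \<in> V0" "b \<in> V1" "a' \<in> V0" "b' \<in> V1" "a + b = a' + b'"
  have e: "a - a' = b' - b" using h(5) by (simp add: algebra_simps)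
  have "a - a' \<in> V0" using h vs.subspace_diff[OF sub0] by auto
  moreover have "b' - b \<in> V1" using h vs.subspace_diff[OF sub1] by auto
  ultimately have "b' - b \<in> V0 \<inter> V1" using e by simp
  then have "b' - b = 0" using int01 by blast
  then have "a - a' = 0" using e by simp
  then show ?thesis using h(5) by simp
qed

definition E :: "complex \<Rightarrow> 'v set" where
  "E s = {a + b | a b. a \<in> V0 \<and> b \<in> V1 \<and> c a = sc s a \<and> c b = sc (- s) b}"

lemma memE: "a \<in> V0 \<Longrightarrow> b \<in> V1 \<Longrightarrow> c a = sc s a \<Longrightarrow> c b = sc (- s) b \<Longrightarrow> a + b \<in> E s"
  unfolding E_def by blast

lemma c0: "c 0 = 0" using cop_scale[of n 0 0] by simp

lemma E_graded: "weyl_graded_submodule m n sc T Dt X Dx V0 V1 (E s)"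
proof -
  have z0: "0 \<in> V0" "0 \<in> V1" using vs.subspace_0[OF sub0] vs.subspace_0[OF sub1] by auto
  have sub: "vs.subspace (E s)"
  proof (rule vs.subspaceI)
    have "0 + 0 \<in> E s" by (rule memE) (simp_all add: z0 c0)
    then show "0 \<in> E s" by simp
  next
    fix x y assume "x \<in> E s" "y \<in> E s"
    then obtain a b a' b' where h: "x = a + b" "a \<in> V0" "b \<in> V1" "c a = sc s a" "c b = sc (- s) b"
      "y = a' + b'" "a' \<in> V0" "b' \<in> V1" "c a' = sc s a'" "c b' = sc (- s) b'"
      unfolding E_def by blast
    have e: "x + y = (a + a') + (b + b')" using h by (simp add: algebra_simps)
    have "(a + a') + (b + b') \<in> E s"
      by (rule memE) (use h vs.subspace_add[OF sub0] vs.subspace_add[OF sub1] in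
          \<open>simp_all add: cop_add vs.scale_right_distrib\<close>)
    then show "x + y \<in> E s" using e by simp
  next
    fix r x assume "x \<in> E s"
    then obtain a b where h: "x = a + b" "a \<in> V0" "b \<in> V1" "c a = sc s a" "c b = sc (- s) b"
      unfolding E_def by blast
    have "sc r a + sc r b \<in> E s"
      by (rule memE) (use h sub0 sub1 in \<open>simp_all add: vs.subspace_def cop_scale mult.commute\<close>)
    then show "sc r x \<in> E s" using h by (simp add: vs.scale_right_distrib)
  qed
  have inv: "(\<forall>i<m. T i ` E s \<subseteq> E s \<and> Dt i ` E s \<subseteq> E s) \<and>
     (\<forall>i<n. X i ` E s \<subseteq> E s \<and> Dx i ` E s \<subseteq> E s)"
  proof (intro allI impI conjI subsetI)
    fix i y assume i: "i < m" "y \<in> T i ` E s"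
    then obtain a b where h: "y = T i (a + b)" "a \<in> V0" "b \<in> V1" "c a = sc s a" "c b = sc (- s) b"
      unfolding E_def by blast
    note l = lin_facts[OF linT[OF i(1)]]
    have "T i a + T i b \<in> E s"
      by (rule memE) (use h i in \<open>simp_all add: parT cop_T l\<close>)
    then show "y \<in> E s" using h l by simp
  next
    fix i y assume i: "i < m" "y \<in> Dt i ` E s"
    then obtain a b where h: "y = Dt i (a + b)" "a \<in> V0" "b \<in> V1" "c a = sc s a" "c b = sc (- s) b"
      unfolding E_def by blast
    note l = lin_facts[OF linDt[OF i(1)]]
    have "Dt i a + Dt i b \<in> E s"
      by (rule memE) (use h i in \<open>simp_all add: parT cop_Dt l\<close>)
    then show "y \<in> E s" using h l by simp
  next
    fix i y assume i: "i < n" "y \<in> X i ` E s"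
    then obtain a b where h: "y = X i (a + b)" "a \<in> V0" "b \<in> V1" "c a = sc s a" "c b = sc (- s) b"
      unfolding E_def by blast
    note l = lin_facts[OF linX[OF i(1)]]
    have "X i b + X i a \<in> E s"
      by (rule memE) (use h i in \<open>simp_all add: parX cop_X l\<close>)
    then show "y \<in> E s" using h l by (simp add: add.commute)
  next
    fix i y assume i: "i < n" "y \<in> Dx i ` E s"
    then obtain a b where h: "y = Dx i (a + b)" "a \<in> V0" "b \<in> V1" "c a = sc s a" "c b = sc (- s) b"
      unfolding E_def by blast
    note l = lin_facts[OF linDx[OF i(1)]]
    have "Dx i b + Dx i a \<in> E s"
      by (rule memE) (use h i in \<open>simp_all add: parX cop_Dx l\<close>)
    then show "y \<in> E s" using h l by (simp add: add.commute)
  qed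
  have gr: "\<forall>w\<in>E s. \<exists>a\<in>E s \<inter> V0. \<exists>b\<in>E s \<inter> V1. w = a + b"
  proof
    fix w assume "w \<in> E s"
    then obtain a b where ab: "w = a + b" "a \<in> V0" "b \<in> V1" "c a = sc s a" "c b = sc (- s) b"
      unfolding E_def by blast
    have "a + 0 \<in> E s" by (rule memE) (simp_all add: ab z0 c0)
    moreover have "0 + b \<in> E s" by (rule memE) (simp_all add: ab z0 c0)
    ultimately show "\<exists>a\<in>E s \<inter> V0. \<exists>b\<in>E s \<inter> V1. w = a + b" using ab by auto
  qed
  show ?thesis unfolding weyl_graded_submodule_def weyl_invariant_subspace_def
    using sub inv gr by blast
qed

lemma EU: assumes "E s = UNIV"
  shows "a \<in> V0 \<Longrightarrow> c a = sc s a" and "b \<in> V1 \<Longrightarrow> c b = sc (- s) b"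
proof -
  have z0: "0 \<in> V0" "0 \<in> V1" using vs.subspace_0[OF sub0] vs.subspace_0[OF sub1] by auto
  assume a: "a \<in> V0"
  have "a \<in> E s" using assms by simp
  then obtain a' b' where h: "a = a' + b'" "a' \<in> V0" "b' \<in> V1" "c a' = sc s a'" "c b' = sc (- s) b'"
    unfolding E_def by blast
  have "a = a'" using uniq[of a 0 a' b'] a z0 h by simp
  then show "c a = sc s a" using h by simp
next
  have z0: "0 \<in> V0" "0 \<in> V1" using vs.subspace_0[OF sub0] vs.subspace_0[OF sub1] by auto
  assume b: "b \<in> V1"
  have "b \<in> E s" using assms by simp
  then obtain a' b' where h: "b = a' + b'" "a' \<in> V0" "b' \<in> V1" "c a' = sc s a'" "c b' = sc (- s) b'"
    unfolding E_def by blast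
  have "b = b'" using uniq[of 0 b a' b'] b z0 h by simp
  then show "c b = sc (- s) b" using h by simp
qed

lemma W_graded:
  assumes W: "weyl_invariant_subspace m n sc T Dt X Dx W"
    and s: "s * s = 1"
    and h0: "\<And>a. a \<in> V0 \<Longrightarrow> c a = sc s a" and h1: "\<And>b. b \<in> V1 \<Longrightarrow> c b = sc (- s) b"
  shows "weyl_graded_submodule m n sc T Dt X Dx V0 V1 W"
proof -
  have sW: "vs.subspace W" using W unfolding weyl_invariant_subspace_def by auto
  have "\<exists>a\<in>W \<inter> V0. \<exists>b\<in>W \<inter> V1. w = a + b" if w: "w \<in> W" for w
  proof -
    obtain a b where ab: "a \<in> V0" "b \<in> V1" "w = a + b" using decomp by blast
    have cw: "c w \<in> W" using cop_W[OF W, of n w] w by simp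
    have "sc s (c w) = sc s (c a) + sc s (c b)" using ab by (simp add: cop_add vs.scale_right_distrib)
    also have "\<dots> = a - b" using ab h0 h1 s by simp
    finally have e: "sc s (c w) = a - b" .
    have d: "sc s (c w) \<in> W" using cw sW by (simp add: vs.subspace_def)
    have "a = sc (1/2) (w + sc s (c w))"
    proof -
      have "w + sc s (c w) = a + a" unfolding e using ab(3) by (simp add: algebra_simps)
      then have "sc (1/2) (w + sc s (c w)) = sc (1/2) (a + a)" by simp
      also have "\<dots> = sc (1/2 + 1/2) a" by (simp only: vs.scale_right_distrib vs.scale_left_distrib)
      finally show ?thesis by simp
    qed
    moreover have "b = sc (1/2) (w - sc s (c w))"
    proof -
      have "w - sc s (c w) = b + b" unfolding e using ab(3) by (simp add: algebra_simps)
      then have "sc (1/2) (w - sc s (c w)) = sc (1/2) (b + b)" by simp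
      also have "\<dots> = sc (1/2 + 1/2) b" by (simp only: vs.scale_right_distrib vs.scale_left_distrib)
      finally show ?thesis by simp
    qed
    moreover have "w + sc s (c w) \<in> W" by (rule vs.subspace_add[OF sW w d])
    moreover have "w - sc s (c w) \<in> W" by (rule vs.subspace_diff[OF sW w d])
    ultimately have "a \<in> W" "b \<in> W" using sW by (auto simp: vs.subspace_def)
    then show ?thesis using ab by blast
  qed
  then show ?thesis using W unfolding weyl_graded_submodule_def by blast
qed

lemma final:
  assumes simple: "\<forall>W. weyl_graded_submodule m n sc T Dt X Dx V0 V1 W \<longrightarrow> W = {0} \<or> W = UNIV"
    and W: "weyl_invariant_subspace m n sc T Dt X Dx W"
  shows "W = {0} \<or> W = UNIV"
proof -
  have sW: "vs.subspace W" using W unfolding weyl_invariant_subspace_def by auto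
  have E1: "E 1 = {0} \<or> E 1 = UNIV" and E2: "E (-1) = {0} \<or> E (-1) = UNIV"
    using simple E_graded by blast+
  have z0: "0 \<in> V0" "0 \<in> V1" using vs.subspace_0[OF sub0] vs.subspace_0[OF sub1] by auto
  have ci: "c (c v) = v" for v by (simp add: cop_inv)
  show ?thesis
  proof (cases "E 1 = UNIV")
    case True
    have "weyl_graded_submodule m n sc T Dt X Dx V0 V1 W"
      by (rule W_graded[OF W, of 1]) (simp, erule EU(1)[OF True], erule EU(2)[OF True])
    then show ?thesis using simple by blast
  next
    case F1: False
    show ?thesis
    proof (cases "E (-1) = UNIV")
      case True
      have "weyl_graded_submodule m n sc T Dt X Dx V0 V1 W"
        by (rule W_graded[OF W, of "-1"]) (simp, erule EU(1)[OF True], erule EU(2)[OF True])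
      then show ?thesis using simple by blast
    next
      case False
      with F1 E1 E2 have Z1: "E 1 = {0}" and Z2: "E (-1) = {0}" by auto
      have all0: "v = 0" for v :: 'v
      proof -
        obtain a b where ab: "a \<in> V0" "b \<in> V1" "v = a + b" using decomp by blast
        have ca: "c a \<in> V0" and cb: "c b \<in> V1" using ab cop_V0 cop_V1 by auto
        have "(a + c a) + 0 \<in> E 1"
          by (rule memE) (use ab ca vs.subspace_add[OF sub0] z0 in \<open>simp_all add: cop_add ci c0\<close>)
        then have p1: "a + c a = 0" using Z1 by simp
        have "(a - c a) + 0 \<in> E (-1)"
          by (rule memE) (use ab ca vs.subspace_diff[OF sub0] z0 in \<open>simp_all add: cop_diff ci c0\<close>)
        then have p2: "a - c a = 0" using Z2 by simp
        have "0 + (b + c b) \<in> E (-1)"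
          by (rule memE) (use ab cb vs.subspace_add[OF sub1] z0 in \<open>simp_all add: cop_add ci c0 add.commute\<close>)
        then have p3: "b + c b = 0" using Z2 by simp
        have "0 + (b - c b) \<in> E 1"
          by (rule memE) (use ab cb vs.subspace_diff[OF sub1] z0 in \<open>simp_all add: cop_diff ci c0\<close>)
        then have p4: "b - c b = 0" using Z1 by simp
        have "a = 0" using half[of a "c a"] p1 p2 by simp
        moreover have "b = 0" using half[of b "c b"] p3 p4 by simp
        ultimately show ?thesis using ab by simp
      qed
      have "W = {0}"
      proof (rule set_eqI)
        fix x :: 'v
        show "x \<in> W \<longleftrightarrow> x \<in> {0}" using vs.subspace_0[OF sW] all0[of x] by simp
      qed
      then show ?thesis ..
    qed
  qed
qed

end

theorem lemma3p3:
  fixes m n :: nat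
    and sc :: "complex \<Rightarrow> 'v::ab_group_add \<Rightarrow> 'v"
    and T Dt X Dx :: "nat \<Rightarrow> 'v \<Rightarrow> 'v"
    and V0 V1 :: "'v set"
  assumes "(m, n) \<noteq> (0, 0)"
    and "weyl_simple m n sc T Dt X Dx V0 V1"
    and "weyl_invariant_subspace m n sc T Dt X Dx W"
  shows "W = {0} \<or> W = UNIV"
proof -
  have wsm: "weyl_super_module m n sc T Dt X Dx V0 V1"
    and simple: "\<forall>W. weyl_graded_submodule m n sc T Dt X Dx V0 V1 W \<longrightarrow> W = {0} \<or> W = UNIV"
    using assms(2) unfolding weyl_simple_def by (blast, blast)
  interpret WSM m n sc T Dt X Dx V0 V1 by (rule WSM.intro) (fact wsm)
  show ?thesis by (rule final[OF simple assms(3)])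
qed

end
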